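(* Let $\mu,\nu$ be subdistributions over nondeterministic expressions with $\mu\Rightarrow\nu$. Then there is a subdistribution $\rho$ with $\rho\le\mu$ and $\rho\le\nu$ such that $\mu-\rho\xRightarrow{\tau}\nu-\rho$.
   Context: Fix a set $\mathsf{Act}$ of actions containing $\tau$. Nondeterministic expressions: $E ::= 0 \mid X \mid \alpha.P \mid \mathrm{rec}\,X.E \mid E + E$; probabilistic expressions: $P ::= \partial(E) \mid P \oplus_p P$ ($0<p<1$). Subdistributions $\mu$ over $S$: $\mu:S\to\mathbb R_{\ge0}$ with $|\mu|=\sum\mu(s)\le1$; $\delta_s$ Dirac; sums, differences and $\le$ pointwise. Semantics: least relations with $\partial(E)\mapsto\delta_E$; $P\oplus_pQ\mapsto p\mu+(1-p)\nu$ if $P\mapsto\mu,Q\mapsto\nu$; $\alpha.P\xrightarrow{\alpha}\mu$ if $P\mapsto\mu$; $\mathrm{rec}\,X.E\xrightarrow{\alpha}\mu$ if $E[\mathrm{rec}\,X.E/X]\xrightarrow{\alpha}\mu$; $E+F\xrightarrow{\alpha}\mu$ and $F+E\xrightarrow{\alpha}\mu$ if $E\xrightarrow{\alpha}\mu$. Combined transitions on subdistributions: least relation with $\delta_E\xrightarrow{\alpha}\mu$ if $E\xrightarrow{\alpha}\mu$, closed under $\sum p_i\nu_i\xrightarrow{\alpha}\sum p_i\mu_i$ ($\nu_i\xrightarrow{\alpha}\mu_i$, $p_i\ge0$, $\sum p_i\le1$). A derivation is a sequence $(\mu_i^{\to},\mu_i^{\times})_{i\in\mathbb N}$ of subdistributions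 with $\mu_i^{\to}\xrightarrow{\tau}\mu^{\to}_{i+1}+\mu^{\times}_{i+1}$ for all $i$; $\mu\Rightarrow\nu$ iff some derivation has $\mu=\mu_0^{\to}+\mu_0^{\times}$ and $\nu=\sum_i\mu_i^\times$. $\mu\xRightarrow{\tau}\nu$ iff $\mu\Rightarrow\rho\xrightarrow{\tau}\eta\Rightarrow\nu$ for some $\rho,\eta$. *)

theory Defs
  imports "HOL-Analysis.Analysis" "HOL-Library.Function_Algebras"
begin

datatype 'a nexp =
    NNil
  | NVar nat
  | NPref 'a "'a pexp"
  | NRec nat "'a nexp"
  | NChoice "'a nexp" "'a nexp"
and 'a pexp =
    PDirac "'a nexp"
  | PChoice "'a pexp" real "'a pexp"

primrec wf_n :: "'a nexp \<Rightarrow> bool" and wf_p :: "'a pexp \<Rightarrow> bool" where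
  "wf_n NNil = True"
| "wf_n (NVar X) = True"
| "wf_n (NPref a P) = wf_p P"
| "wf_n (NRec X E) = wf_n E"
| "wf_n (NChoice E F) = (wf_n E \<and> wf_n F)"
| "wf_p (PDirac E) = wf_n E"
| "wf_p (PChoice P p Q) = (0 < p \<and> p < 1 \<and> wf_p P \<and> wf_p Q)"

primrec subst_n :: "nat \<Rightarrow> 'a nexp \<Rightarrow> 'a nexp \<Rightarrow> 'a nexp"
  and subst_p :: "nat \<Rightarrow> 'a nexp \<Rightarrow> 'a pexp \<Rightarrow> 'a pexp" where
  "subst_n X F NNil = NNil"
| "subst_n X F (NVar Y) = (if Y = X then F else NVar Y)"
| "subst_n X F (NPref a P) = NPref a (subst_p X F P)"
| "subst_n X F (NRec Y E) = (if Y = X then NRec Y E else NRec Y (subst_n X F E))"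
| "subst_n X F (NChoice E E') = NChoice (subst_n X F E) (subst_n X F E')"
| "subst_p X F (PDirac E) = PDirac (subst_n X F E)"
| "subst_p X F (PChoice P p Q) = PChoice (subst_p X F P) p (subst_p X F Q)"

type_synonym 'a sd = "'a nexp \<Rightarrow> real"

definition subdist :: "'a sd \<Rightarrow> bool" where
  "subdist \<mu> \<longleftrightarrow> (\<forall>s. 0 \<le> \<mu> s) \<and> \<mu> summable_on UNIV \<and> infsum \<mu> UNIV \<le> 1
      \<and> (\<forall>s. \<mu> s \<noteq> 0 \<longrightarrow> wf_n s)"

definition dirac :: "'a nexp \<Rightarrow> 'a sd" where
  "dirac E = (\<lambda>s. if s = E then 1 else 0)"

inductive pev :: "'a pexp \<Rightarrow> 'a sd \<Rightarrow> bool" where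
  pev_dirac: "pev (PDirac E) (dirac E)"
| pev_choice: "pev P \<mu> \<Longrightarrow> pev Q \<nu> \<Longrightarrow> pev (PChoice P p Q) (\<lambda>s. p * \<mu> s + (1 - p) * \<nu> s)"

inductive step :: "'a nexp \<Rightarrow> 'a \<Rightarrow> 'a sd \<Rightarrow> bool" where
  step_pref: "pev P \<mu> \<Longrightarrow> step (NPref a P) a \<mu>"
| step_rec: "step (subst_n X (NRec X E) E) a \<mu> \<Longrightarrow> step (NRec X E) a \<mu>"
| step_choiceL: "step E a \<mu> \<Longrightarrow> step (NChoice E F) a \<mu>"
| step_choiceR: "step E a \<mu> \<Longrightarrow> step (NChoice F E) a \<mu>"

text \<open>Combined transitions on subdistributions (closure under countable,
  hence in particular finite, subconvex combinations).\<close>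

inductive ctrans :: "'a sd \<Rightarrow> 'a \<Rightarrow> 'a sd \<Rightarrow> bool" where
  ctrans_base: "step E a \<mu> \<Longrightarrow> ctrans (dirac E) a \<mu>"
| ctrans_comb: "(\<And>i. ctrans (\<nu> i) a (\<mu> i)) \<Longrightarrow> (\<And>i. 0 \<le> p i) \<Longrightarrow> summable p \<Longrightarrow> suminf p \<le> 1
    \<Longrightarrow> ctrans (\<lambda>s. \<Sum>i. p i * \<nu> i s) a (\<lambda>s. \<Sum>i. p i * \<mu> i s)"

definition derivation :: "'a \<Rightarrow> (nat \<Rightarrow> 'a sd) \<Rightarrow> (nat \<Rightarrow> 'a sd) \<Rightarrow> bool" where
  "derivation tau mto mx \<longleftrightarrow> (\<forall>i. subdist (mto i) \<and> subdist (mx i))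
     \<and> (\<forall>i. ctrans (mto i) tau (mto (Suc i) + mx (Suc i)))"

definition weak :: "'a \<Rightarrow> 'a sd \<Rightarrow> 'a sd \<Rightarrow> bool" where
  "weak tau \<mu> \<nu> \<longleftrightarrow> (\<exists>mto mx. derivation tau mto mx \<and> \<mu> = mto 0 + mx 0
     \<and> \<nu> = (\<lambda>s. \<Sum>i. mx i s))"

definition weak_tau :: "'a \<Rightarrow> 'a sd \<Rightarrow> 'a sd \<Rightarrow> bool" where
  "weak_tau tau \<mu> \<nu> \<longleftrightarrow> (\<exists>\<rho> \<eta>. weak tau \<mu> \<rho> \<and> ctrans \<rho> tau \<eta> \<and> weak tau \<eta> \<nu>)"

end

theory Submission
  imports Defs
begin

lemma L:
  fixes h :: "nat \<Rightarrow> 'b \<Rightarrow> real"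
  assumes nn: "\<And>i s. 0 \<le> h i s" and hs: "\<And>i. (h i has_sum c i) UNIV" and cs: "summable c"
  shows "((\<lambda>s. \<Sum>i. h i s) has_sum (\<Sum>i. c i)) UNIV \<and> (\<forall>s. summable (\<lambda>i. h i s))"
proof -
  have cnn: "\<And>i. 0 \<le> c i" using hs nn by (meson has_sum_nonneg)
  have chs: "(c has_sum (\<Sum>i. c i)) UNIV"
    using sums_nonneg_imp_has_sum[OF summable_sums[OF cs] cnn] .
  have fs: "(\<lambda>(i,s). h i s) summable_on Sigma UNIV (\<lambda>_. UNIV)"
    apply (rule summable_on_SigmaI[where g=c])
    using hs chs nn by (auto simp: has_sum_imp_summable)
  have fh: "((\<lambda>(i,s). h i s) has_sum (\<Sum>i. c i)) (Sigma UNIV (\<lambda>_. UNIV))"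
    apply (rule has_sum_SigmaI[where g=c])
    using hs chs fs by auto
  hence fh2: "((\<lambda>(s,i). h i s) has_sum (\<Sum>i. c i)) (UNIV \<times> UNIV)"
    by (subst (asm) has_sum_swap) (simp add: case_prod_unfold)
  have ps: "summable (\<lambda>i. h i s)" for s
  proof -
    have "(\<lambda>(x,y). (\<lambda>s i. h i s) x y) summable_on Sigma UNIV (\<lambda>_. UNIV)"
      using fh2 has_sum_imp_summable by fastforce
    from summable_on_SigmaD1[OF this, of s] show ?thesis
      by (simp add: summable_on_imp_summable)
  qed
  have "((\<lambda>s. \<Sum>i. h i s) has_sum (\<Sum>i. c i)) UNIV"
    apply (rule has_sum_SigmaD[where B="\<lambda>_. UNIV" and f="\<lambda>(s,i). h i s"])
    using fh2 apply simp
    using sums_nonneg_imp_has_sum[OF summable_sums[OF ps] nn] by simp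
  with ps show ?thesis by blast
qed


lemma wf_subst: "wf_n F \<Longrightarrow> wf_n E \<Longrightarrow> wf_n (subst_n X F E)"
  and "wf_n F \<Longrightarrow> wf_p P \<Longrightarrow> wf_p (subst_p X F P)"
  by (induct E and P) auto

lemma has_sum_dirac: "(dirac E has_sum 1) UNIV"
proof -
  have "(dirac E has_sum dirac E E) UNIV"
    by (rule has_sum_finite_neutralI[where B="{E}"]) (auto simp: dirac_def)
  thus ?thesis by (simp add: dirac_def)
qed

lemma pev_mass: "pev P \<mu> \<Longrightarrow> wf_p P \<Longrightarrow> (\<forall>s. 0 \<le> \<mu> s) \<and> (\<mu> has_sum 1) UNIV"
proof (induct rule: pev.induct)
  case (pev_dirac E)
  then show ?case using has_sum_dirac by (auto simp: dirac_def)
next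
  case (pev_choice P \<mu> Q \<nu> p)
  then have h: "0 < p" "p < 1" "\<forall>s. 0 \<le> \<mu> s" "(\<mu> has_sum 1) UNIV" "\<forall>s. 0 \<le> \<nu> s" "(\<nu> has_sum 1) UNIV" by auto
  have "((\<lambda>s. p * \<mu> s + (1 - p) * \<nu> s) has_sum (p * 1 + (1 - p) * 1)) UNIV"
    by (intro has_sum_add has_sum_cmult_right h)
  with h show ?case by simp
qed

lemma step_mass: "step E a \<mu> \<Longrightarrow> wf_n E \<Longrightarrow> (\<forall>s. 0 \<le> \<mu> s) \<and> (\<mu> has_sum 1) UNIV"
proof (induct rule: step.induct)
  case (step_pref P \<mu> a)
  then show ?case using pev_mass by auto
next
  case (step_rec X E a \<mu>)
  then have "wf_n (subst_n X (NRec X E) E)" using wf_subst(1)[of "NRec X E" E X] by simp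
  with step_rec show ?case by blast
qed auto

lemma ctrans_src: "ctrans \<nu> a \<mu> \<Longrightarrow> (\<forall>s. 0 \<le> \<nu> s) \<and> (\<nu> has_sum infsum \<nu> UNIV) UNIV \<and> infsum \<nu> UNIV \<le> 1"
proof (induct rule: ctrans.induct)
  case (ctrans_base E a \<mu>)
  have "infsum (dirac E) UNIV = 1" using has_sum_dirac by (rule infsumI)
  then show ?case using has_sum_dirac by (auto simp: dirac_def)
next
  case (ctrans_comb \<nu> a \<mu> p)
  define c where "c i = p i * infsum (\<nu> i) UNIV" for i
  have c1: "0 \<le> c i" "c i \<le> p i" for i
    using ctrans_comb(2)[of i] ctrans_comb(3)[of i] unfolding c_def
    by (auto simp: infsum_nonneg mult_left_le)
  have cs: "summable c"
    by (rule summable_comparison_test[OF _ ctrans_comb(4)]) (use c1 in auto)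
  have Lr: "((\<lambda>s. \<Sum>i. p i * \<nu> i s) has_sum (\<Sum>i. c i)) UNIV \<and> (\<forall>s. summable (\<lambda>i. p i * \<nu> i s))"
    apply (rule L[OF _ _ cs])
    using ctrans_comb(2,3) unfolding c_def by (auto intro: has_sum_cmult_right)
  moreover have "(\<Sum>i. c i) \<le> 1"
    using suminf_le[of c p] c1 cs ctrans_comb(4,5) by force
  moreover have "0 \<le> (\<Sum>i. p i * \<nu> i s)" for s
    using ctrans_comb(2,3) Lr by (auto intro!: suminf_nonneg)
  ultimately show ?case using Lr by (auto simp: infsumI)
qed


lemma comb_L:
  fixes f :: "nat \<Rightarrow> 'b \<Rightarrow> real" and p :: "nat \<Rightarrow> real"
  assumes nn: "\<And>i s. 0 \<le> f i s" and hs: "\<And>i. (f i has_sum infsum (f i) UNIV) UNIV"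
    and le1: "\<And>i. infsum (f i) UNIV \<le> 1"
    and p: "\<And>i. 0 \<le> p i" "summable p"
  shows "((\<lambda>s. \<Sum>i. p i * f i s) has_sum (\<Sum>i. p i * infsum (f i) UNIV)) UNIV
     \<and> (\<forall>s. summable (\<lambda>i. p i * f i s))
     \<and> summable (\<lambda>i. p i * infsum (f i) UNIV)"
proof -
  define c where "c i = p i * infsum (f i) UNIV" for i
  have c1: "0 \<le> c i" "c i \<le> p i" for i
  proof -
    have "0 \<le> infsum (f i) UNIV" by (rule infsum_nonneg) (rule nn)
    then show "0 \<le> c i" "c i \<le> p i" using le1[of i] p(1)[of i] unfolding c_def
      by (auto simp: mult_left_le)
  qed
  have cs: "summable c"
    by (rule summable_comparison_test[OF _ p(2)]) (use c1 in auto)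
  have "((\<lambda>s. \<Sum>i. p i * f i s) has_sum (\<Sum>i. c i)) UNIV \<and> (\<forall>s. summable (\<lambda>i. p i * f i s))"
    apply (rule L[OF _ _ cs])
    using nn hs p unfolding c_def by (auto intro: has_sum_cmult_right)
  with cs show ?thesis unfolding c_def by auto
qed

lemma ctrans_tgt: "ctrans \<nu> a \<mu> \<Longrightarrow> (\<forall>s. \<nu> s \<noteq> 0 \<longrightarrow> wf_n s) \<Longrightarrow>
   (\<forall>s. 0 \<le> \<mu> s) \<and> (\<mu> has_sum infsum \<mu> UNIV) UNIV \<and> infsum \<mu> UNIV \<le> infsum \<nu> UNIV"
proof (induct rule: ctrans.induct)
  case (ctrans_base E a \<mu>)
  have "wf_n E" using ctrans_base(2) by (auto simp: dirac_def)
  with step_mass[OF ctrans_base(1)] have "(\<forall>s. 0 \<le> \<mu> s) \<and> (\<mu> has_sum 1) UNIV" by blast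
  moreover have "infsum (dirac E) UNIV = 1" using has_sum_dirac by (rule infsumI)
  ultimately show ?case by (auto simp: infsumI)
next
  case (ctrans_comb \<nu> a \<mu> p)
  have src: "(\<forall>s. 0 \<le> \<nu> i s) \<and> (\<nu> i has_sum infsum (\<nu> i) UNIV) UNIV \<and> infsum (\<nu> i) UNIV \<le> 1" for i
    using ctrans_src[OF ctrans_comb(1)] by blast
  have LS: "((\<lambda>s. \<Sum>i. p i * \<nu> i s) has_sum (\<Sum>i. p i * infsum (\<nu> i) UNIV)) UNIV
     \<and> (\<forall>s. summable (\<lambda>i. p i * \<nu> i s))
     \<and> summable (\<lambda>i. p i * infsum (\<nu> i) UNIV)"
    by (rule comb_L) (use src ctrans_comb(3,4) in auto)
  have good: "(\<forall>s. 0 \<le> \<mu> i s) \<and> (\<mu> i has_sum infsum (\<mu> i) UNIV) UNIV \<and> infsum (\<mu> i) UNIV \<le> infsum (\<nu> i) UNIV"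
    if pi: "0 < p i" for i
  proof -
    have "wf_n s" if ns: "\<nu> i s \<noteq> 0" for s
    proof -
      have "0 < p i * \<nu> i s" using ns src[of i] pi by (simp add: order_less_le)
      also have "p i * \<nu> i s \<le> (\<Sum>j. p j * \<nu> j s)"
        apply (rule sum_le_suminf[where I="{i}", simplified])
        using LS ctrans_comb(3) src by auto
      finally show ?thesis using ctrans_comb(6) by auto
    qed
    then show ?thesis using ctrans_comb(2) by blast
  qed
  define g where "g i = (if p i = 0 then (\<lambda>s. 0) else \<mu> i)" for i
  have gp: "p i * g i s = p i * \<mu> i s" for i s by (simp add: g_def)
  have g1a: "(\<forall>s. 0 \<le> g i s) \<and> (g i has_sum infsum (g i) UNIV) UNIV \<and> infsum (g i) UNIV \<le> infsum (\<nu> i) UNIV" for i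
  proof (cases "p i = 0")
    case True
    have "0 \<le> infsum (\<nu> i) UNIV" by (rule infsum_nonneg) (use src[of i] in auto)
    then show ?thesis using True by (auto simp: g_def)
  next
    case False
    then have "0 < p i" using ctrans_comb(3)[of i] by linarith
    then show ?thesis using good[of i] False by (auto simp: g_def)
  qed
  have g1: "0 \<le> g i s" "(g i has_sum infsum (g i) UNIV) UNIV" "infsum (g i) UNIV \<le> infsum (\<nu> i) UNIV" for i s
    using g1a[of i] by auto
  have LT: "((\<lambda>s. \<Sum>i. p i * g i s) has_sum (\<Sum>i. p i * infsum (g i) UNIV)) UNIV
     \<and> (\<forall>s. summable (\<lambda>i. p i * g i s))
     \<and> summable (\<lambda>i. p i * infsum (g i) UNIV)"
  proof (rule comb_L)
    show "infsum (g i) UNIV \<le> 1" for i using g1(3)[of i] src[of i] by linarith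
  qed (use g1 ctrans_comb(3,4) in auto)
  have le: "(\<Sum>i. p i * infsum (g i) UNIV) \<le> (\<Sum>i. p i * infsum (\<nu> i) UNIV)"
    apply (rule suminf_le) using LT LS g1 ctrans_comb(3) by (auto intro: mult_left_mono)
  have nn: "0 \<le> (\<Sum>i. p i * \<mu> i s)" for s
  proof -
    have "0 \<le> (\<Sum>i. p i * g i s)"
      by (rule suminf_nonneg) (use LT g1 ctrans_comb(3) in auto)
    then show ?thesis unfolding gp .
  qed
  show ?case using LT LS le nn unfolding gp by (auto simp: infsumI)
qed


lemma ctrans_zero: "ctrans \<nu> a \<mu> \<Longrightarrow> ctrans 0 a 0"
proof -
  assume h: "ctrans \<nu> a \<mu>"
  have "ctrans (\<lambda>s. \<Sum>i. (\<lambda>_. 0::real) i * (\<lambda>_. \<nu>) i s) a (\<lambda>s. \<Sum>i. (\<lambda>_. 0::real) i * (\<lambda>_. \<mu>) i s)"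
    by (rule ctrans_comb) (use h in auto)
  then show ?thesis by (simp add: zero_fun_def)
qed

lemma subdist_zero: "subdist 0"
  by (simp add: subdist_def zero_fun_def)

lemma weak_refl:
  assumes "subdist \<mu>" "ctrans 0 tau 0"
  shows "weak tau \<mu> \<mu>"
  unfolding weak_def
proof (intro exI conjI)
  let ?mto = "\<lambda>_::nat. (0::'a sd)" and ?mx = "\<lambda>i::nat. if i = 0 then \<mu> else 0"
  show "derivation tau ?mto ?mx"
    unfolding derivation_def using assms subdist_zero by auto
  show "\<mu> = ?mto 0 + ?mx 0" by simp
  show "\<mu> = (\<lambda>s. \<Sum>i. ?mx i s)"
  proof
    fix s
    have "(\<lambda>i. ?mx i s) = (\<lambda>i. if i = 0 then \<mu> s else 0)" by auto
    moreover have "(\<lambda>i::nat. if i = 0 then \<mu> s else 0) sums \<mu> s"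
      using sums_single[of 0 "\<lambda>_. \<mu> s"] by simp
    ultimately show "\<mu> s = (\<Sum>i. ?mx i s)" by (simp add: sums_iff)
  qed
qed

lemma single_le_infsum:
  fixes f :: "'b \<Rightarrow> real"
  assumes "\<And>s. 0 \<le> f s" "f summable_on UNIV"
  shows "f x \<le> infsum f UNIV"
proof -
  have "infsum f {x} \<le> infsum f UNIV"
    by (rule infsum_mono_neutral) (use assms in auto)
  then show ?thesis by simp
qed

theorem mainTheorem11:
  fixes tau :: 'a and \<mu> \<nu> :: "'a sd"
  assumes "subdist \<mu>" and "subdist \<nu>" and "weak tau \<mu> \<nu>"
  shows "\<exists>\<rho>. subdist \<rho> \<and> \<rho> \<le> \<mu> \<and> \<rho> \<le> \<nu> \<and> weak_tau tau (\<mu> - \<rho>) (\<nu> - \<rho>)"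
proof -
  from assms(3) obtain mto mx where D: "derivation tau mto mx" and mu: "\<mu> = mto 0 + mx 0"
    and nu: "\<nu> = (\<lambda>s. \<Sum>i. mx i s)" unfolding weak_def by blast
  have sdo: "subdist (mto i)" and sdx: "subdist (mx i)"
    and ct: "ctrans (mto i) tau (mto (Suc i) + mx (Suc i))" for i
    using D unfolding derivation_def by auto
  have nno: "0 \<le> mto i s" and nnx: "0 \<le> mx i s" and so: "mto i summable_on UNIV"
    and sx: "mx i summable_on UNIV" and wfo: "\<forall>s. mto i s \<noteq> 0 \<longrightarrow> wf_n s" for i s
    using sdo[of i] sdx[of i] unfolding subdist_def by auto
  define m where "m f = infsum f (UNIV :: 'a nexp set)" for f :: "'a sd"
  have madd: "m (mto i + mx i) = m (mto i) + m (mx i)" for i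
    unfolding m_def plus_fun_def by (rule infsum_add[OF so sx])
  have stp: "m (mto (Suc i)) + m (mx (Suc i)) \<le> m (mto i)" for i
    using ctrans_tgt[OF ct[of i] wfo[of i]] madd[of "Suc i"] unfolding m_def by simp
  have mnn: "0 \<le> m (mto i)" "0 \<le> m (mx i)" for i
    unfolding m_def by (rule infsum_nonneg, use nno nnx in auto)+
  have mmu: "m \<mu> \<le> 1" using assms(1) unfolding subdist_def m_def by auto
  have inv: "(\<Sum>i<Suc n. m (mx i)) + m (mto n) \<le> m \<mu>" for n
  proof (induct n)
    case 0
    have "m \<mu> = m (mto 0) + m (mx 0)" using madd[of 0] mu by metis
    then show ?case by simp
  next
    case (Suc n)
    then show ?case using stp[of n] by simp
  qed
  have bnd: "(\<Sum>i<n. m (mx i)) \<le> 1" for n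
  proof -
    have "(\<Sum>i<n. m (mx i)) \<le> (\<Sum>i<Suc n. m (mx i))" using mnn by simp
    then show ?thesis using inv[of n] mnn[of n] mmu by linarith
  qed
  have msum: "summable (\<lambda>i. m (mx i))"
    by (rule summableI_nonneg_bounded[where x=1]) (use mnn bnd in auto)
  have ps: "summable (\<lambda>i. mx i s)" for s
  proof (rule summable_comparison_test[OF _ msum])
    show "\<exists>N. \<forall>n\<ge>N. norm (mx n s) \<le> m (mx n)"
      using single_le_infsum[OF _ sx] nnx unfolding m_def by auto
  qed
  define \<rho> where "\<rho> = mx 0"
  have "\<mu> - \<rho> = mto 0" unfolding mu \<rho>_def by simp
  moreover have "\<nu> - \<rho> = (\<lambda>s. \<Sum>n. mx (Suc n) s)"
    unfolding nu \<rho>_def by (rule ext) (simp add: suminf_split_head[OF ps])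
  moreover have "\<rho> \<le> \<mu>" unfolding mu \<rho>_def le_fun_def using nno by simp
  moreover have "\<rho> \<le> \<nu>" unfolding nu \<rho>_def le_fun_def
  proof
    fix s
    show "mx 0 s \<le> (\<Sum>i. mx i s)"
      using sum_le_suminf[OF ps[of s], of "{0}"] nnx by auto
  qed
  moreover have "weak_tau tau (mto 0) (\<lambda>s. \<Sum>n. mx (Suc n) s)"
    unfolding weak_tau_def
  proof (intro exI conjI)
    show "weak tau (mto 0) (mto 0)" by (rule weak_refl[OF sdo ctrans_zero[OF ct]])
    show "ctrans (mto 0) tau (mto (Suc 0) + mx (Suc 0))" by (rule ct)
    show "weak tau (mto (Suc 0) + mx (Suc 0)) (\<lambda>s. \<Sum>n. mx (Suc n) s)"
      unfolding weak_def
    proof (intro exI conjI)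
      show "derivation tau (\<lambda>i. mto (Suc i)) (\<lambda>i. mx (Suc i))"
        unfolding derivation_def using sdo sdx ct by auto
    qed auto
  qed
  moreover have "subdist \<rho>" unfolding \<rho>_def by (rule sdx)
  ultimately show ?thesis by metis
qed

end
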